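(* Let $(\mathcal{P},d)$ be a tree metric given by the weighted tree $T$, and let $\alpha>0$. In the greedy-routing network creation game on $(\mathcal{P},d)$ with edge price $\alpha$, the profile $\mathbf{s}^T$ (every agent $u$ builds edges exactly to its neighbours in $T$) is the unique Greedy Equilibrium. Consequently it is also the unique Nash equilibrium.
   Context: A tree metric on a finite set $\mathcal{P}$ is given by a spanning tree $T$ on $\mathcal{P}$ with positive edge weights, $d(x,y)=d_T(x,y)$ being the weight of the unique $x$–$y$ path in $T$. Game: agents are the points of $\mathcal{P}$; agent $u$'s strategy is $S_u\subseteq\mathcal{P}\setminus\{u\}$; a profile $\mathbf{s}$ defines the directed network with arcs $(u,v)$, $v\in S_u$, of length $d(u,v)$. A greedy path from $u$ to $v$ is a directed path $u=x_1,\dots,x_j=v$ of arcs with $d(x_i,v)>d(x_{i+1},v)$ for all $i$. $\mathrm{stretch}(u,v)$ is the minimum length of a greedy path from $u$ to $v$ divided by $d(u,v)$, or a fixed sufficiently large penalty constant $Z$ if none exists. Cost: $c_u(\mathbf{s})=\sum_{v\ne u}\mathrm{stretch}(u,v)+\alpha|S_u|$. A Greedy Equilibrium is a profile in which no agent can strictly decrease its cost by adding one element to, deleting one element from, or swapping one element of its strategy (others fixed). A Nash equilibrium is a profile in which no agent can strictly decrease its cost by any change of its own strategy; every Nash equilibrium is a Greedy Equilibrium. *)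

theory Defs
  imports Complex_Main
begin

definition plen :: "('a \<Rightarrow> 'a \<Rightarrow> real) \<Rightarrow> 'a list \<Rightarrow> real" where
  "plen w xs = sum_list (map (\<lambda>(a, b). w a b) (zip xs (tl xs)))"

definition tpath :: "('a \<times> 'a) set \<Rightarrow> 'a \<Rightarrow> 'a \<Rightarrow> 'a list \<Rightarrow> bool" where
  "tpath E x y xs \<longleftrightarrow> xs \<noteq> [] \<and> hd xs = x \<and> last xs = y \<and> distinct xs \<and>
     (\<forall>i. Suc i < length xs \<longrightarrow> (xs ! i, xs ! Suc i) \<in> E)"

definition is_spanning_tree :: "'a set \<Rightarrow> ('a \<times> 'a) set \<Rightarrow> bool" where
  "is_spanning_tree P E \<longleftrightarrow> E \<subseteq> P \<times> P \<and> sym E \<and> (\<forall>x. (x, x) \<notin> E) \<and>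
     (\<forall>x\<in>P. \<forall>y\<in>P. \<exists>!xs. tpath E x y xs)"

definition pos_weights :: "('a \<times> 'a) set \<Rightarrow> ('a \<Rightarrow> 'a \<Rightarrow> real) \<Rightarrow> bool" where
  "pos_weights E w \<longleftrightarrow> (\<forall>(x, y)\<in>E. w x y > 0 \<and> w x y = w y x)"

definition tree_dist :: "('a \<times> 'a) set \<Rightarrow> ('a \<Rightarrow> 'a \<Rightarrow> real) \<Rightarrow> 'a \<Rightarrow> 'a \<Rightarrow> real" where
  "tree_dist E w x y = plen w (THE xs. tpath E x y xs)"

definition valid_profile :: "'a set \<Rightarrow> ('a \<Rightarrow> 'a set) \<Rightarrow> bool" where
  "valid_profile P s \<longleftrightarrow> (\<forall>u\<in>P. s u \<subseteq> P - {u})"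

definition greedy_path :: "('a \<Rightarrow> 'a \<Rightarrow> real) \<Rightarrow> ('a \<Rightarrow> 'a set) \<Rightarrow> 'a \<Rightarrow> 'a \<Rightarrow> 'a list \<Rightarrow> bool" where
  "greedy_path d s u v xs \<longleftrightarrow> xs \<noteq> [] \<and> hd xs = u \<and> last xs = v \<and>
     (\<forall>i. Suc i < length xs \<longrightarrow> xs ! Suc i \<in> s (xs ! i) \<and> d (xs ! i) v > d (xs ! Suc i) v)"

definition stretch :: "('a \<Rightarrow> 'a \<Rightarrow> real) \<Rightarrow> real \<Rightarrow> ('a \<Rightarrow> 'a set) \<Rightarrow> 'a \<Rightarrow> 'a \<Rightarrow> real" where
  "stretch d Z s u v =
     (if \<exists>xs. greedy_path d s u v xs
      then Min {plen d xs | xs. greedy_path d s u v xs} / d u v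
      else Z)"

definition cost :: "'a set \<Rightarrow> ('a \<Rightarrow> 'a \<Rightarrow> real) \<Rightarrow> real \<Rightarrow> real \<Rightarrow> ('a \<Rightarrow> 'a set) \<Rightarrow> 'a \<Rightarrow> real" where
  "cost P d Z \<alpha> s u = (\<Sum>v\<in>P - {u}. stretch d Z s u v) + \<alpha> * real (card (s u))"

definition greedy_moves :: "'a set \<Rightarrow> 'a \<Rightarrow> 'a set \<Rightarrow> 'a set set" where
  "greedy_moves P u S =
     {insert v S | v. v \<in> P - {u} - S} \<union>
     {S - {v} | v. v \<in> S} \<union>
     {insert w (S - {v}) | v w. v \<in> S \<and> w \<in> P - {u} - S}"

definition greedy_equilibrium ::
  "'a set \<Rightarrow> ('a \<Rightarrow> 'a \<Rightarrow> real) \<Rightarrow> real \<Rightarrow> real \<Rightarrow> ('a \<Rightarrow> 'a set) \<Rightarrow> bool" where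
  "greedy_equilibrium P d Z \<alpha> s \<longleftrightarrow> valid_profile P s \<and>
     (\<forall>u\<in>P. \<forall>S'\<in>greedy_moves P u (s u). cost P d Z \<alpha> s u \<le> cost P d Z \<alpha> (s(u := S')) u)"

definition nash_equilibrium ::
  "'a set \<Rightarrow> ('a \<Rightarrow> 'a \<Rightarrow> real) \<Rightarrow> real \<Rightarrow> real \<Rightarrow> ('a \<Rightarrow> 'a set) \<Rightarrow> bool" where
  "nash_equilibrium P d Z \<alpha> s \<longleftrightarrow> valid_profile P s \<and>
     (\<forall>u\<in>P. \<forall>S'. S' \<subseteq> P - {u} \<longrightarrow> cost P d Z \<alpha> s u \<le> cost P d Z \<alpha> (s(u := S')) u)"

definition tree_profile :: "'a set \<Rightarrow> ('a \<times> 'a) set \<Rightarrow> 'a \<Rightarrow> 'a set" where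
  "tree_profile P E u = {v \<in> P. (u, v) \<in> E}"

end

theory Submission
  imports Defs
begin

fun ep :: "('a \<times> 'a) set \<Rightarrow> 'a list \<Rightarrow> bool" where
  "ep E [] = True" | "ep E [x] = True" | "ep E (x#y#xs) = ((x,y)\<in>E \<and> ep E (y#xs))"

lemma ep_nth: "(\<forall>i. Suc i < length xs \<longrightarrow> (xs!i, xs!Suc i) \<in> E) \<longleftrightarrow> ep E xs"
proof (induction E xs rule: ep.induct)
  case (3 E x y xs)
  have "(\<forall>i. Suc i < length (x#y#xs) \<longrightarrow> ((x#y#xs)!i, (x#y#xs)!Suc i) \<in> E) \<longleftrightarrow>
     (x,y)\<in>E \<and> (\<forall>i. Suc i < length (y#xs) \<longrightarrow> ((y#xs)!i, (y#xs)!Suc i) \<in> E)"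
    (is "?L \<longleftrightarrow> ?R")
  proof
    assume L: ?L
    have "(x,y)\<in>E" using L[rule_format, of 0] by simp
    moreover have "\<forall>i. Suc i < length (y#xs) \<longrightarrow> ((y#xs)!i, (y#xs)!Suc i) \<in> E"
      using L by (metis Suc_less_eq length_Cons nth_Cons_Suc)
    ultimately show ?R by blast
  next
    assume R: ?R
    show ?L
    proof (intro allI impI)
      fix i assume "Suc i < length (x#y#xs)"
      then show "((x#y#xs)!i, (x#y#xs)!Suc i) \<in> E" using R by (cases i) auto
    qed
  qed
  then show ?case using 3 by simp
qed auto

lemma tpath_ep: "tpath E x y xs \<longleftrightarrow> xs \<noteq> [] \<and> hd xs = x \<and> last xs = y \<and> distinct xs \<and> ep E xs"
  unfolding tpath_def ep_nth by blast

lemma ep_append: "ep E (xs @ y # ys) \<longleftrightarrow> ep E (xs @ [y]) \<and> ep E (y # ys)"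
proof (induction xs)
  case (Cons a xs) then show ?case by (cases xs) auto
qed simp

lemma ep_Cons: "ep E (x # xs) \<longleftrightarrow> ep E xs \<and> (xs \<noteq> [] \<longrightarrow> (x, hd xs) \<in> E)"
  by (cases xs) auto

lemma ep_snoc: "ep E (ys @ [x]) \<longleftrightarrow> ep E ys \<and> (ys \<noteq> [] \<longrightarrow> (last ys, x) \<in> E)"
proof (induction ys)
  case (Cons a ys) then show ?case by (cases ys) auto
qed simp

lemma ep_rev: "sym E \<Longrightarrow> ep E (rev xs) = ep E xs"
proof (induction xs)
  case (Cons x xs)
  have "ep E (rev (x#xs)) \<longleftrightarrow> ep E (rev xs) \<and> (xs \<noteq> [] \<longrightarrow> (hd xs, x) \<in> E)"
    by (simp add: ep_snoc last_rev)
  also have "\<dots> \<longleftrightarrow> ep E xs \<and> (xs \<noteq> [] \<longrightarrow> (x, hd xs) \<in> E)"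
    using Cons by (metis symD)
  also have "\<dots> \<longleftrightarrow> ep E (x#xs)" by (simp add: ep_Cons)
  finally show ?case .
qed simp

lemma ep_take: "ep E xs \<Longrightarrow> ep E (take n xs)"
  unfolding ep_nth[symmetric] by (simp add: nth_take)

lemma ep_drop: "ep E xs \<Longrightarrow> ep E (drop n xs)"
  unfolding ep_nth[symmetric]
proof (intro allI impI)
  fix i assume H: "\<forall>i. Suc i < length xs \<longrightarrow> (xs ! i, xs ! Suc i) \<in> E" "Suc i < length (drop n xs)"
  then have "Suc (n+i) < length xs" by simp
  then show "(drop n xs ! i, drop n xs ! Suc i) \<in> E" using H(1) by simp
qed

lemma plen_Nil[simp]: "plen w [] = 0" and plen_single[simp]: "plen w [x] = 0"
  and plen_Cons2[simp]: "plen w (x#y#xs) = w x y + plen w (y#xs)"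
  by (simp_all add: plen_def)

lemma plen_append: "plen w (xs @ y # ys) = plen w (xs @ [y]) + plen w (y # ys)"
proof (induction xs)
  case (Cons a xs) then show ?case by (cases xs) auto
qed simp

lemma ep_mono: "ep R xs \<Longrightarrow> (\<And>a b. a \<in> set xs \<Longrightarrow> (a,b) \<in> R \<Longrightarrow> (a,b) \<in> R') \<Longrightarrow> ep R' xs"
  by (induction R xs rule: ep.induct) auto

lemma ep_set: "ep E xs \<Longrightarrow> E \<subseteq> P \<times> P \<Longrightarrow> xs \<noteq> [] \<Longrightarrow> hd xs \<in> P \<Longrightarrow> set xs \<subseteq> P"
proof (induction xs)
  case (Cons x xs)
  show ?case
  proof (cases "xs = []")
    case False
    then have "(x, hd xs) \<in> E" "ep E xs" using Cons.prems(1) by (simp_all add: ep_Cons)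
    then have "hd xs \<in> P" using Cons.prems(2) by blast
    then have "set xs \<subseteq> P" using Cons.IH \<open>ep E xs\<close> Cons.prems(2) False by blast
    then show ?thesis using Cons.prems(4) by simp
  qed (use Cons.prems(4) in simp)
qed simp

lemma plen_snoc: "plen w (ys @ [x]) = plen w ys + (if ys = [] then 0 else w (last ys) x)"
proof (induction ys)
  case (Cons a ys) then show ?case by (cases ys) auto
qed simp

lemma plen_Cons: "plen w (x # xs) = plen w xs + (if xs = [] then 0 else w x (hd xs))"
  by (cases xs) auto

lemma chain_Cons2: "(\<forall>i. Suc i < length (a#b#ys) \<longrightarrow> Q ((a#b#ys)!i) ((a#b#ys)!Suc i)) \<longleftrightarrow>
   Q a b \<and> (\<forall>i. Suc i < length (b#ys) \<longrightarrow> Q ((b#ys)!i) ((b#ys)!Suc i))" (is "?L \<longleftrightarrow> ?R")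
proof
  assume L: ?L
  have "Q a b" using L[rule_format, of 0] by simp
  moreover have "\<forall>i. Suc i < length (b#ys) \<longrightarrow> Q ((b#ys)!i) ((b#ys)!Suc i)"
  proof (intro allI impI)
    fix i assume "Suc i < length (b#ys)"
    then have "Suc (Suc i) < length (a#b#ys)" by simp
    then have "Q ((a#b#ys)!Suc i) ((a#b#ys)!Suc (Suc i))" using L by blast
    then show "Q ((b#ys)!i) ((b#ys)!Suc i)" by simp
  qed
  ultimately show ?R by blast
next
  assume R: ?R
  show ?L
  proof (intro allI impI)
    fix i assume i: "Suc i < length (a#b#ys)"
    show "Q ((a#b#ys)!i) ((a#b#ys)!Suc i)"
    proof (cases i)
      case 0 then show ?thesis using R by simp
    next
      case (Suc j)
      then have "Suc j < length (b#ys)" using i by simp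
      then have "Q ((b#ys)!j) ((b#ys)!Suc j)" using R by blast
      then show ?thesis using Suc by simp
    qed
  qed
qed

lemma gp_Nil[simp]: "\<not> greedy_path d s u v []"
  by (simp add: greedy_path_def)

lemma gp_single: "greedy_path d s u v [z] \<longleftrightarrow> z = u \<and> u = v"
  by (auto simp add: greedy_path_def)

lemma gp_Cons2: "greedy_path d s u v (a # b # ys) \<longleftrightarrow>
   a = u \<and> b \<in> s a \<and> d b v < d a v \<and> greedy_path d s b v (b # ys)"
  unfolding greedy_path_def using chain_Cons2[where Q="\<lambda>x y. y \<in> s x \<and> d y v < d x v" and a=a and b=b and ys=ys] by auto

lemma gp_step: assumes "greedy_path d s u v xs" "u \<noteq> v"
  obtains b ys where "xs = u # b # ys" "b \<in> s u" "d b v < d u v" "greedy_path d s b v (b # ys)"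
proof -
  obtain a zs where a: "xs = a # zs" using assms(1) by (cases xs) auto
  show ?thesis
  proof (cases zs)
    case Nil then show ?thesis using assms a by (simp add: gp_single)
  next
    case (Cons b ys) then show ?thesis using assms a that by (auto simp: gp_Cons2)
  qed
qed

lemma gp_le: "greedy_path d s u v xs \<Longrightarrow> y \<in> set xs \<Longrightarrow> d y v \<le> d u v"
proof (induction xs arbitrary: u)
  case (Cons a zs)
  show ?case
  proof (cases zs)
    case Nil then show ?thesis using Cons.prems by (simp add: gp_single)
  next
    fix b ys assume Cons1: "zs = b # ys"
    have g: "a = u" "d b v < d u v" "greedy_path d s b v (b # ys)"
      using Cons.prems(1) Cons1 by (auto simp: gp_Cons2)
    show ?thesis
    proof (cases "y = a")
      case True then show ?thesis using g by simp
    next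
      case False
      then have "y \<in> set zs" using Cons.prems(2) by simp
      then have "d y v \<le> d b v" using Cons.IH g(3) Cons1 by blast
      then show ?thesis using g by simp
    qed
  qed
qed simp

lemma gp_lt: "greedy_path d s u v (a # b # ys) \<Longrightarrow> y \<in> set (b # ys) \<Longrightarrow> d y v < d u v"
  using gp_le[of d s b v "b#ys" y] by (auto simp: gp_Cons2)

lemma gp_distinct: "greedy_path d s u v xs \<Longrightarrow> distinct xs"
proof (induction xs arbitrary: u)
  case (Cons a zs)
  show ?case
  proof (cases zs)
    case Nil then show ?thesis by simp
  next
    fix b ys assume Cons1: "zs = b # ys"
    have g: "a = u" "greedy_path d s b v (b # ys)" using Cons.prems Cons1 by (auto simp: gp_Cons2)
    have "a \<notin> set zs" using gp_lt[of d s u v a b ys a] Cons.prems Cons1 g(1) by auto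
    moreover have "distinct zs" using Cons.IH g(2) Cons1 by blast
    ultimately show ?thesis by simp
  qed
qed simp

lemma gp_hd_notin: "greedy_path d s u v (u # ys) \<Longrightarrow> u \<notin> set ys"
  using gp_distinct by fastforce

lemma gp_upd: "u \<notin> set xs \<Longrightarrow> greedy_path d (s(u := S)) z v xs \<longleftrightarrow> greedy_path d s z v xs"
proof -
  assume u: "u \<notin> set xs"
  have "\<And>i. i < length xs \<Longrightarrow> (s(u := S)) (xs ! i) = s (xs ! i)"
    using u by (metis fun_upd_other nth_mem)
  then show ?thesis unfolding greedy_path_def by (metis Suc_lessD)
qed

lemma gp_set: "greedy_path d s u v xs \<Longrightarrow> u \<in> A \<Longrightarrow> (\<And>x. x \<in> A \<Longrightarrow> s x \<subseteq> A) \<Longrightarrow> set xs \<subseteq> A"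
proof (induction xs arbitrary: u)
  case (Cons a zs)
  show ?case
  proof (cases zs)
    case Nil then show ?thesis using Cons.prems by (simp add: gp_single)
  next
    fix b ys assume Cons1: "zs = b # ys"
    have g: "a = u" "b \<in> s u" "greedy_path d s b v (b # ys)" using Cons.prems(1) Cons1 by (auto simp: gp_Cons2)
    have "b \<in> A" using g(2) Cons.prems(2,3) by blast
    then have "set zs \<subseteq> A" using Cons.IH[of b] g(3) Cons1 Cons.prems(3) by blast
    then show ?thesis using g(1) Cons.prems(2) by simp
  qed
qed simp


locale tree =
  fixes P :: "'a set" and E :: "('a \<times> 'a) set" and w :: "'a \<Rightarrow> 'a \<Rightarrow> real"
  assumes finP: "finite P" and st: "is_spanning_tree P E" and pw: "pos_weights E w"
begin

lemma E_sub: "E \<subseteq> P \<times> P" and symE: "sym E" and irr: "(x,x) \<notin> E"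
  and uniq: "x \<in> P \<Longrightarrow> y \<in> P \<Longrightarrow> \<exists>!xs. tpath E x y xs"
  using st unfolding is_spanning_tree_def by auto

lemma w_pos: "(x,y) \<in> E \<Longrightarrow> w x y > 0" and w_sym: "(x,y) \<in> E \<Longrightarrow> w x y = w y x"
  using pw unfolding pos_weights_def by auto

lemma E_P: "(x,y) \<in> E \<Longrightarrow> x \<in> P" "(x,y) \<in> E \<Longrightarrow> y \<in> P"
  using E_sub by auto

definition tp where "tp x y = (THE xs. tpath E x y xs)"

lemma tp: "x \<in> P \<Longrightarrow> y \<in> P \<Longrightarrow> tpath E x y (tp x y)"
  unfolding tp_def by (rule theI', rule uniq)

lemma tp_unique: "x \<in> P \<Longrightarrow> y \<in> P \<Longrightarrow> tpath E x y xs \<Longrightarrow> tp x y = xs"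
  using tp uniq by blast

abbreviation d where "d \<equiv> tree_dist E w"

lemma d_tp: "d x y = plen w (tp x y)"
  unfolding tree_dist_def tp_def ..

lemma tp_props: assumes "x \<in> P" "y \<in> P"
  shows "tp x y \<noteq> []" "hd (tp x y) = x" "last (tp x y) = y" "distinct (tp x y)" "ep E (tp x y)"
    "set (tp x y) \<subseteq> P"
proof -
  have T: "tpath E x y (tp x y)" using tp assms by blast
  show "tp x y \<noteq> []" "hd (tp x y) = x" "last (tp x y) = y" "distinct (tp x y)" "ep E (tp x y)"
    using T unfolding tpath_ep by auto
  then show "set (tp x y) \<subseteq> P" using ep_set[of E "tp x y" P] E_sub assms by simp
qed

lemma tp_self: "x \<in> P \<Longrightarrow> tp x x = [x]"
  by (rule tp_unique) (auto simp: tpath_ep)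

lemma tp_edge: "(x,y) \<in> E \<Longrightarrow> tp x y = [x,y]"
  using E_P[of x y] irr by (intro tp_unique) (auto simp: tpath_ep)

lemma tp_Cons: assumes "x \<in> P" "y \<in> P" "x \<noteq> y"
  obtains z rest where "tp x y = x # z # rest" "(x,z) \<in> E" "tp z y = z # rest" "z \<in> P"
proof -
  obtain ys where ys: "tp x y = x # ys" using tp_props[OF assms(1,2)]
    by (metis list.collapse)
  have "ys \<noteq> []" using tp_props(3)[OF assms(1,2)] ys assms(3) by auto
  then obtain z rest where zr: "ys = z # rest" by (metis list.exhaust)
  have e: "(x,z) \<in> E" using tp_props(5)[OF assms(1,2)] ys zr by simp
  have "tpath E z y (z # rest)"
    using tp_props[OF assms(1,2)] ys zr by (auto simp: tpath_ep)
  then have "tp z y = z # rest" using tp_unique E_P(2)[OF e] assms by blast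
  then show ?thesis using that ys zr e E_P(2)[OF e] by blast
qed

lemma tp_rev: assumes "x \<in> P" "y \<in> P" shows "tp y x = rev (tp x y)"
proof (rule tp_unique[OF assms(2,1)])
  show "tpath E y x (rev (tp x y))" using tp_props[OF assms] symE
    by (auto simp: tpath_ep ep_rev hd_rev last_rev)
qed

lemma tp_drop: assumes "x \<in> P" "y \<in> P" "i < length (tp x y)"
  shows "tp (tp x y ! i) y = drop i (tp x y)"
proof (rule tp_unique)
  show "tp x y ! i \<in> P" using tp_props[OF assms(1,2)] assms(3) by (meson nth_mem subsetD)
  show "tpath E (tp x y ! i) y (drop i (tp x y))" using tp_props[OF assms(1,2)] assms(3)
    by (auto simp: tpath_ep ep_drop hd_drop_conv_nth)
qed (fact assms)

lemma tp_take: assumes "x \<in> P" "y \<in> P" "i < length (tp x y)"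
  shows "tp x (tp x y ! i) = take (Suc i) (tp x y)"
proof (rule tp_unique)
  show "tp x y ! i \<in> P" using tp_props[OF assms(1,2)] assms(3) by (meson nth_mem subsetD)
  let ?xs = "tp x y"
  have tk: "take (Suc i) ?xs = take i ?xs @ [?xs ! i]" using assms(3) by (rule take_Suc_conv_app_nth)
  have ne: "take (Suc i) ?xs \<noteq> []" using tp_props(1)[OF assms(1,2)] by simp
  have "hd (take (Suc i) ?xs) = take (Suc i) ?xs ! 0" using ne by (simp add: hd_conv_nth)
  also have "\<dots> = ?xs ! 0" by simp
  also have "\<dots> = x" using tp_props(1,2)[OF assms(1,2)] by (simp add: hd_conv_nth)
  finally have h: "hd (take (Suc i) ?xs) = x" .
  show "tpath E x (tp x y ! i) (take (Suc i) (tp x y))" unfolding tpath_ep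
  proof (intro conjI)
    show "distinct (take (Suc i) ?xs)" using tp_props(4)[OF assms(1,2)] by simp
    show "last (take (Suc i) ?xs) = ?xs ! i" by (simp add: tk)
    show "ep E (take (Suc i) ?xs)" using tp_props(5)[OF assms(1,2)] by (rule ep_take)
  qed (use ne h in auto)
qed (fact assms)

lemma plen_rev: "ep E xs \<Longrightarrow> plen w (rev xs) = plen w xs"
proof (induction xs)
  case (Cons x xs)
  have e: "ep E xs" "xs \<noteq> [] \<Longrightarrow> (x, hd xs) \<in> E" using Cons.prems by (simp_all add: ep_Cons)
  have "plen w (rev (x#xs)) = plen w (rev xs) + (if xs = [] then 0 else w (hd xs) x)"
    by (simp add: plen_snoc last_rev)
  also have "\<dots> = plen w xs + (if xs = [] then 0 else w x (hd xs))"
    using Cons.IH[OF e(1)] e(2) w_sym[of x "hd xs"] by auto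
  also have "\<dots> = plen w (x#xs)" by (simp add: plen_Cons)
  finally show ?case .
qed simp

lemma plen_nonneg: "ep E xs \<Longrightarrow> plen w xs \<ge> 0"
proof (induction xs)
  case (Cons x xs)
  have e: "ep E xs" "xs \<noteq> [] \<Longrightarrow> (x, hd xs) \<in> E" using Cons.prems by (simp_all add: ep_Cons)
  show ?case
  proof (cases "xs = []")
    case False
    then have "w x (hd xs) > 0" using e(2) w_pos by blast
    then show ?thesis using Cons.IH[OF e(1)] False by (simp add: plen_Cons)
  qed simp
qed simp

lemma plen_pos: "ep E (x # y # xs) \<Longrightarrow> plen w (x # y # xs) > 0"
  using plen_nonneg[of "y#xs"] w_pos[of x y] by simp

lemma d_self: "x \<in> P \<Longrightarrow> d x x = 0"
  by (simp add: d_tp tp_self)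

lemma d_nonneg: "x \<in> P \<Longrightarrow> y \<in> P \<Longrightarrow> d x y \<ge> 0"
  using d_tp plen_nonneg tp_props(5) by metis

lemma d_sym: "x \<in> P \<Longrightarrow> y \<in> P \<Longrightarrow> d y x = d x y"
  using d_tp plen_rev tp_props(5) tp_rev by metis

lemma d_edge: "(x,y) \<in> E \<Longrightarrow> d x y = w x y"
  by (simp add: d_tp tp_edge)

lemma d_Cons: assumes "tp x y = x # z # rest" "tp z y = z # rest"
  shows "d x y = w x z + d z y"
  by (simp add: d_tp assms)

lemma d_pos: assumes "x \<in> P" "y \<in> P" "x \<noteq> y" shows "d x y > 0"
proof -
  obtain z rest where "tp x y = x # z # rest" using tp_Cons[OF assms] by blast
  then show ?thesis using plen_pos tp_props(5)[OF assms(1,2)] d_tp by metis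
qed

definition nxt where "nxt x y = tp x y ! 1"

lemma junction: assumes "x \<in> P" "a \<in> P" "b \<in> P" "a \<noteq> x" "b \<noteq> x" "nxt x a \<noteq> nxt x b"
  shows "tp a b = rev (tp x a) @ tl (tp x b)" "d a b = d x a + d x b"
proof -
  obtain za ra where A: "tp x a = x # za # ra" using tp_Cons[OF assms(1,2)] assms(4) by metis
  obtain zb rb where B: "tp x b = x # zb # rb" using tp_Cons[OF assms(1,3)] assms(5) by metis
  have disj: "set (tp x a) \<inter> set (tp x b) \<subseteq> {x}"
  proof
    fix q assume q: "q \<in> set (tp x a) \<inter> set (tp x b)"
    show "q \<in> {x}"
    proof (rule ccontr)
      assume qx: "q \<notin> {x}"
      obtain i where i: "i < length (tp x a)" "tp x a ! i = q" using q by (meson IntD1 in_set_conv_nth)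
      obtain j where j: "j < length (tp x b)" "tp x b ! j = q" using q by (meson IntD2 in_set_conv_nth)
      have "i \<noteq> 0"
      proof
        assume "i = 0" then have "q = x" using i(2) A by simp
        then show False using qx by simp
      qed
      have "j \<noteq> 0"
      proof
        assume "j = 0" then have "q = x" using j(2) B by simp
        then show False using qx by simp
      qed
      have "take (Suc i) (tp x a) = take (Suc j) (tp x b)"
        using tp_take[OF assms(1,2) i(1)] tp_take[OF assms(1,3) j(1)] i(2) j(2) by simp
      then have "take (Suc i) (tp x a) ! 1 = take (Suc j) (tp x b) ! 1" by simp
      then have "tp x a ! 1 = tp x b ! 1" using \<open>i \<noteq> 0\<close> \<open>j \<noteq> 0\<close> by simp
      then show False using assms(6) unfolding nxt_def by simp
    qed
  qed
  have dA: "distinct (x # za # ra)" and dB: "distinct (x # zb # rb)"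
    using tp_props(4)[OF assms(1,2)] tp_props(4)[OF assms(1,3)] A B by auto
  have eA: "ep E (x # za # ra)" and eB: "ep E (x # zb # rb)"
    using tp_props(5)[OF assms(1,2)] tp_props(5)[OF assms(1,3)] A B by auto
  have la: "last (x # za # ra) = a" and lb: "last (x # zb # rb) = b"
    using tp_props(3)[OF assms(1,2)] tp_props(3)[OF assms(1,3)] A B by auto
  let ?L = "rev (za # ra) @ x # zb # rb"
  have eq: "rev (tp x a) @ tl (tp x b) = ?L" using A B by simp
  have "tpath E a b ?L"
    unfolding tpath_ep
  proof (intro conjI)
    show "?L \<noteq> []" by simp
    have h1: "hd ?L = hd (rev (za#ra))" by (rule hd_append2) simp
    have h2: "hd (rev (za#ra)) = last (za#ra)" by (rule hd_rev)
    have h3: "last (x#za#ra) = last (za#ra)" by (rule last_ConsR) simp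
    show "hd ?L = a" unfolding h1 h2 h3[symmetric] by (rule la)
    show "last ?L = b" using lb by simp
    have s1: "set (za#ra) \<inter> set (x#zb#rb) = {}"
    proof (rule equals0I)
      fix q assume q: "q \<in> set (za#ra) \<inter> set (x#zb#rb)"
      then have "q \<in> set (tp x a) \<inter> set (tp x b)" using A B by auto
      then have "q = x" using disj by blast
      then show False using q dA by simp
    qed
    have d1: "distinct (rev (za#ra))" using dA by simp
    show "distinct ?L" unfolding distinct_append set_rev using d1 dB s1 by blast
    have r: "rev (za # ra) @ [x] = rev (x # za # ra)" by simp
    have "ep E (rev (x # za # ra))" using eA ep_rev[OF symE, of "x # za # ra"] by blast
    then have "ep E (rev (za # ra) @ [x])" by (simp only: r)
    then show "ep E ?L" using eB ep_append[of E "rev (za # ra)" x "zb # rb"] by blast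
  qed
  then show T: "tp a b = rev (tp x a) @ tl (tp x b)" using tp_unique assms(2,3) eq by metis
  have "plen w ?L = plen w (rev (za # ra) @ [x]) + plen w (x # zb # rb)" by (rule plen_append)
  also have "\<dots> = plen w (rev (x # za # ra)) + plen w (x # zb # rb)" by simp
  also have "\<dots> = d x a + d x b" using plen_rev[OF eA] A B d_tp by simp
  finally show "d a b = d x a + d x b" using T eq d_tp by simp
qed

lemma junction_d: assumes "x \<in> P" "a \<in> P" "b \<in> P" "a = x \<or> b = x \<or> nxt x a \<noteq> nxt x b"
  shows "d a b = d x a + d x b"
proof -
  consider "a = x" | "b = x" | "a \<noteq> x" "b \<noteq> x" "nxt x a \<noteq> nxt x b" using assms(4) by blast
  then show ?thesis
  proof cases
    case 1 then show ?thesis using d_self[OF assms(1)] by simp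
  next
    case 2 then show ?thesis using d_self[OF assms(1)] d_sym[OF assms(1,2)] by simp
  next
    case 3 then show ?thesis using junction(2)[OF assms(1-3)] by blast
  qed
qed

lemma nxt_edge: "(u,x) \<in> E \<Longrightarrow> nxt u x = x"
  by (simp add: nxt_def tp_edge)

lemma nxt_Cons: assumes "u \<in> P" "v \<in> P" "u \<noteq> v"
  shows "tp u v = u # tp (nxt u v) v" "(u, nxt u v) \<in> E" "d u v = w u (nxt u v) + d (nxt u v) v"
    "nxt u v \<in> P"
proof -
  obtain z rest where zr: "tp u v = u # z # rest" "(u,z) \<in> E" "tp z v = z # rest" "z \<in> P"
    using tp_Cons[OF assms] by blast
  have "nxt u v = z" using zr by (simp add: nxt_def)
  then show "tp u v = u # tp (nxt u v) v" "(u, nxt u v) \<in> E" "d u v = w u (nxt u v) + d (nxt u v) v"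
    "nxt u v \<in> P"
    using zr d_Cons[OF zr(1,3)] by auto
qed

lemma char_in: assumes "(u,x) \<in> E" "v \<in> P" "v \<noteq> u" "nxt u v = x"
  shows "d u v = w u x + d x v"
  using nxt_Cons(3)[OF E_P(1)[OF assms(1)] assms(2)] assms(3,4) by auto

lemma char_out: assumes "(u,x) \<in> E" "v \<in> P" "\<not> (v \<noteq> u \<and> nxt u v = x)"
  shows "d x v = w u x + d u v"
proof -
  have u: "u \<in> P" and x: "x \<in> P" using E_P assms(1) by auto
  have "x \<noteq> u" using irr assms(1) by auto
  have "d x v = d u x + d u v"
    using junction_d[OF u x assms(2)] assms(3) nxt_edge[OF assms(1)] by auto
  then show ?thesis using d_edge[OF assms(1)] by simp
qed

lemma char_iff: assumes "(u,x) \<in> E" "v \<in> P"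
  shows "d x v < d u v \<longleftrightarrow> v \<noteq> u \<and> nxt u v = x"
proof
  assume "d x v < d u v"
  then show "v \<noteq> u \<and> nxt u v = x" using char_out[OF assms] w_pos[OF assms(1)] by force
next
  assume "v \<noteq> u \<and> nxt u v = x"
  then show "d x v < d u v" using char_in[OF assms] w_pos[OF assms(1)] by force
qed

lemma first_hop: assumes "u \<in> P" "z \<in> P" "v \<in> P" "d z v < d u v" "z \<noteq> u" "v \<noteq> u"
  shows "nxt u z = nxt u v"
proof (rule ccontr)
  assume "nxt u z \<noteq> nxt u v"
  then have "d z v = d u z + d u v" using junction_d[OF assms(1-3)] by blast
  then show False using assms(4) d_nonneg[OF assms(1,2)] by simp
qed

lemma tri_step: assumes "(a,x) \<in> E" "c \<in> P" shows "d a c \<le> w a x + d x c"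
proof (cases "c \<noteq> a \<and> nxt a c = x")
  case True then show ?thesis using char_in[OF assms] by simp
next
  case False then show ?thesis using char_out[OF assms] w_pos[OF assms(1)] by simp
qed

lemma triangle: assumes "a \<in> P" "b \<in> P" "c \<in> P" shows "d a c \<le> d a b + d b c"
  using assms
proof (induction "length (tp a b)" arbitrary: a rule: less_induct)
  case less
  show ?case
  proof (cases "a = b")
    case True then show ?thesis using d_self less.prems by simp
  next
    case False
    let ?x = "nxt a b"
    note N = nxt_Cons[OF less.prems(1,2) False]
    have "length (tp ?x b) < length (tp a b)" using N(1) by simp
    then have IH: "d ?x c \<le> d ?x b + d b c" using less.hyps N(4) less.prems by blast
    show ?thesis using tri_step[OF N(2) less.prems(3)] IH N(3) by simp
  qed
qed

lemma valid_sub: "valid_profile P s \<Longrightarrow> x \<in> P \<Longrightarrow> s x \<subseteq> P"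
  and valid_notin: "valid_profile P s \<Longrightarrow> x \<in> P \<Longrightarrow> x \<notin> s x"
  unfolding valid_profile_def by auto

lemma gp_setP: "valid_profile P s \<Longrightarrow> u \<in> P \<Longrightarrow> greedy_path d s u v xs \<Longrightarrow> set xs \<subseteq> P"
  using gp_set[of d s u v xs P] valid_sub by blast

lemma gp_plen: "valid_profile P s \<Longrightarrow> u \<in> P \<Longrightarrow> v \<in> P \<Longrightarrow> greedy_path d s u v xs \<Longrightarrow> d u v \<le> plen d xs"
proof (induction xs arbitrary: u)
  case (Cons a zs)
  show ?case
  proof (cases zs)
    case Nil then show ?thesis using Cons.prems d_self by (simp add: gp_single)
  next
    fix b ys assume Cons1: "zs = b # ys"
    have g: "a = u" "b \<in> s u" "greedy_path d s b v (b # ys)" using Cons.prems(4) Cons1 by (auto simp: gp_Cons2)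
    have bP: "b \<in> P" using g(2) valid_sub Cons.prems(1,2) by blast
    have "d b v \<le> plen d zs" using Cons.IH[OF Cons.prems(1) bP Cons.prems(3)] g(3) Cons1 by blast
    moreover have "d u v \<le> d u b + d b v" using triangle Cons.prems(2,3) bP by blast
    ultimately show ?thesis using g(1) Cons1 by simp
  qed
qed simp

lemma gp_fin: assumes "valid_profile P s" "u \<in> P" shows "finite {xs. greedy_path d s u v xs}"
proof (rule finite_subset)
  show "{xs. greedy_path d s u v xs} \<subseteq> {xs. set xs \<subseteq> P \<and> length xs \<le> card P}"
  proof
    fix xs assume "xs \<in> {xs. greedy_path d s u v xs}"
    then have g: "greedy_path d s u v xs" by simp
    have sP: "set xs \<subseteq> P" using gp_setP[OF assms g] .
    have "length xs = card (set xs)" using gp_distinct[OF g] by (simp add: distinct_card)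
    also have "\<dots> \<le> card P" using sP finP by (simp add: card_mono)
    finally show "xs \<in> {xs. set xs \<subseteq> P \<and> length xs \<le> card P}" using sP by simp
  qed
  show "finite {xs. set xs \<subseteq> P \<and> length xs \<le> card P}" using finP by (rule finite_lists_length_le)
qed

lemma stretch_ge1: assumes "valid_profile P s" "u \<in> P" "v \<in> P" "u \<noteq> v" "Z \<ge> 1"
  shows "1 \<le> stretch d Z s u v"
proof (cases "\<exists>xs. greedy_path d s u v xs")
  case True
  let ?A = "{plen d xs | xs. greedy_path d s u v xs}"
  have fin: "finite ?A" using gp_fin[OF assms(1,2), of v] by simp
  have ne: "?A \<noteq> {}" using True by blast
  have "d u v \<le> Min ?A" using fin ne gp_plen[OF assms(1-3)] by (auto simp: Min_ge_iff)
  moreover have "d u v > 0" using d_pos assms by blast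
  ultimately have "1 \<le> Min ?A / d u v" by simp
  then show ?thesis using True by (simp add: stretch_def)
qed (use assms(5) in \<open>simp add: stretch_def\<close>)

lemma stretch_eq1: assumes "valid_profile P s" "u \<in> P" "v \<in> P" "u \<noteq> v"
  "greedy_path d s u v xs" "plen d xs = d u v"
  shows "stretch d Z s u v = 1"
proof -
  let ?A = "{plen d xs | xs. greedy_path d s u v xs}"
  have fin: "finite ?A" using gp_fin[OF assms(1,2), of v] by simp
  have "Min ?A = d u v"
  proof (rule Min_eqI[OF fin])
    show "\<And>y. y \<in> ?A \<Longrightarrow> d u v \<le> y" using gp_plen[OF assms(1-3)] by blast
    show "d u v \<in> ?A" using assms(5,6) by force
  qed
  moreover have "d u v > 0" using d_pos assms by blast
  ultimately show ?thesis using assms(5) by (auto simp: stretch_def)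
qed

lemma stretch_gt1: assumes "valid_profile P s" "u \<in> P" "v \<in> P" "u \<noteq> v" "Z > 1"
  "\<And>xs. greedy_path d s u v xs \<Longrightarrow> plen d xs > d u v"
  shows "stretch d Z s u v > 1"
proof (cases "\<exists>xs. greedy_path d s u v xs")
  case True
  let ?A = "{plen d xs | xs. greedy_path d s u v xs}"
  have fin: "finite ?A" using gp_fin[OF assms(1,2), of v] by simp
  have ne: "?A \<noteq> {}" using True by blast
  have "Min ?A \<in> ?A" using Min_in[OF fin ne] .
  then have "d u v < Min ?A" using assms(6) by auto
  moreover have "d u v > 0" using d_pos assms by blast
  ultimately have "1 < Min ?A / d u v" by simp
  then show ?thesis using True by (simp add: stretch_def)
qed (use assms(5) in \<open>simp add: stretch_def\<close>)

lemma stretch_none: "\<not> (\<exists>xs. greedy_path d s u v xs) \<Longrightarrow> stretch d Z s u v = Z"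
  by (simp add: stretch_def)

lemma stretch_cong: "(\<And>xs. greedy_path d s u v xs \<longleftrightarrow> greedy_path d t u v xs) \<Longrightarrow>
   stretch d Z s u v = stretch d Z t u v"
  by (simp add: stretch_def)

lemma tp_greedy: assumes "x \<in> P" "v \<in> P" "ep {(a,b). b \<in> t a} (tp x v)"
  shows "greedy_path d t x v (tp x v) \<and> plen d (tp x v) = d x v"
  using assms
proof (induction "length (tp x v)" arbitrary: x rule: less_induct)
  case less
  show ?case
  proof (cases "x = v")
    case True then show ?thesis using tp_self less.prems d_self by (simp add: gp_single)
  next
    case False
    let ?z = "nxt x v"
    note N = nxt_Cons[OF less.prems(1,2) False]
    obtain rest where r: "tp ?z v = ?z # rest" using tp_props(1,2)[OF N(4) less.prems(2)] by (metis list.collapse)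
    have T: "tp x v = x # ?z # rest" using N(1) r by simp
    have e: "?z \<in> t x" "ep {(a,b). b \<in> t a} (tp ?z v)" using less.prems(3) T r by (simp_all add: ep_Cons)
    have "length (tp ?z v) < length (tp x v)" using N(1) by simp
    then have IH: "greedy_path d t ?z v (tp ?z v) \<and> plen d (tp ?z v) = d ?z v"
      using less.hyps N(4) less.prems(2) e(2) by blast
    have wp: "w x ?z > 0" using w_pos N(2) by blast
    have "greedy_path d t x v (x # ?z # rest)" unfolding gp_Cons2 using e(1) IH r N(3) wp by simp
    moreover have "plen d (x # ?z # rest) = d x v" using IH r N(3) d_edge[OF N(2)] by simp
    ultimately show ?thesis using T by simp
  qed
qed

definition branch where "branch a b = {c \<in> P. d b c < d a c}"

lemma below_sub: assumes "u \<in> P" "v \<in> P" "xs = tp u v" "1 \<le> k" "Suc k < length xs"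
  "c \<in> branch (xs!k) (xs!Suc k)"
  shows "tp u c = take (Suc k) xs @ tl (tp (xs!k) c)" "tl (tp (xs!k) c) \<noteq> []" "c \<in> P" "c \<noteq> u"
    "nxt u c = xs ! 1"
proof -
  let ?a = "xs!k" and ?b = "xs!Suc k"
  note TP = tp_props[OF assms(1,2), folded assms(3)]
  have ab: "(?a, ?b) \<in> E" using TP(5) assms(5) unfolding ep_nth[symmetric] by blast
  have aP: "?a \<in> P" using TP(6) assms(5) by (meson Suc_lessD nth_mem subsetD)
  have cP: "c \<in> P" and dc: "d ?b c < d ?a c" using assms(6) unfolding branch_def by auto
  show "c \<in> P" by (fact cP)
  have c1: "c \<noteq> ?a" "nxt ?a c = ?b" using char_iff[OF ab cP] dc by auto
  have kl: "k < length xs" using assms(5) by simp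
  have tua: "tp u ?a = take (Suc k) xs" using tp_take[OF assms(1,2), folded assms(3), OF kl] .
  have tau: "tp ?a u = rev (take (Suc k) xs)" using tp_rev[OF assms(1) aP] tua by simp
  have "nxt ?a u = rev (take (Suc k) xs) ! 1" using tau by (simp add: nxt_def)
  also have "\<dots> = take (Suc k) xs ! (k - 1)" using assms(4) kl by (simp add: rev_nth)
  also have "\<dots> = xs ! (k - 1)" using assms(4) by simp
  finally have nau: "nxt ?a u = xs ! (k - 1)" .
  have "xs ! (k - 1) \<noteq> xs ! Suc k" using TP(4) assms(4,5) by (simp add: nth_eq_iff_index_eq)
  then have neq: "nxt ?a u \<noteq> nxt ?a c" using nau c1 by simp
  have hd0: "xs ! 0 = u" using TP(1,2) by (simp add: hd_conv_nth)
  have "xs ! 0 \<noteq> xs ! k" using nth_eq_iff_index_eq[OF TP(4), of 0 k] assms(4) kl TP(1) by simp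
  then have ua: "u \<noteq> ?a" using hd0 by simp
  have J: "tp u c = rev (tp ?a u) @ tl (tp ?a c)"
    using junction(1)[OF aP assms(1) cP ua c1(1) neq] .
  then show T: "tp u c = take (Suc k) xs @ tl (tp ?a c)" using tau by simp
  obtain z rest where "tp ?a c = ?a # z # rest" using tp_Cons[OF aP cP c1(1)[symmetric]] by blast
  then show tne: "tl (tp ?a c) \<noteq> []" by simp
  show "c \<noteq> u"
  proof
    assume "c = u"
    then have "tp u c = [u]" using tp_self assms(1) by simp
    moreover have "length (tp u c) = length (take (Suc k) xs) + length (tl (tp ?a c))" using T by simp
    moreover have "length (take (Suc k) xs) = Suc k" using assms(5) by simp
    ultimately show False using assms(4) by simp
  qed
  have "tp u c ! 1 = take (Suc k) xs ! 1" using T assms(4) kl by (simp add: nth_append)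
  then show "nxt u c = xs ! 1" using assms(4) by (simp add: nxt_def)
qed

lemma below: assumes "u \<in> P" "v \<in> P" "xs = tp u v" "1 \<le> k" "Suc k < length xs"
  shows "card (branch (xs!k) (xs!Suc k)) < card (branch (xs!0) (xs!1))"
proof -
  note TP = tp_props[OF assms(1,2), folded assms(3)]
  have hd0: "xs ! 0 = u" using TP(1,2) by (simp add: hd_conv_nth)
  have l1: "Suc 0 < length xs" using assms(4,5) by simp
  have "(xs!0, xs!Suc 0) \<in> E" using TP(5) l1 unfolding ep_nth[symmetric] by blast
  then have ux: "(u, xs!1) \<in> E" using hd0 by (simp add: One_nat_def)
  have sub: "branch (xs!k) (xs!Suc k) \<subseteq> branch (xs!0) (xs!1)"
  proof
    fix c assume c: "c \<in> branch (xs!k) (xs!Suc k)"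
    note B = below_sub[OF assms c]
    have "d (xs!1) c < d u c" using char_iff[OF ux B(3)] B(4,5) by simp
    then show "c \<in> branch (xs!0) (xs!1)" using B(3) hd0 unfolding branch_def by simp
  qed
  have xP: "xs!1 \<in> P" using E_P(2)[OF ux] .
  have "xs!1 \<noteq> u" using ux irr by auto
  then have "d u (xs!1) > 0" using d_pos[OF assms(1) xP] by simp
  then have "d (xs!1) (xs!1) < d (xs!0) (xs!1)" using d_self[OF xP] hd0 by simp
  then have xin: "xs!1 \<in> branch (xs!0) (xs!1)" using xP unfolding branch_def by blast
  have xout: "xs!1 \<notin> branch (xs!k) (xs!Suc k)"
  proof
    assume c: "xs!1 \<in> branch (xs!k) (xs!Suc k)"
    note B = below_sub[OF assms c]
    have "length (tp u (xs!1)) = 2" using tp_edge[OF ux] by simp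
    moreover have "length (tp u (xs!1)) = length (take (Suc k) xs) + length (tl (tp (xs!k) (xs!1)))"
      using B(1) by simp
    moreover have "length (take (Suc k) xs) = Suc k" using assms(5) by simp
    moreover have "length (tl (tp (xs!k) (xs!1))) \<noteq> 0" using B(2) by (metis length_0_conv)
    ultimately show False using assms(4) by simp
  qed
  have "branch (xs!k) (xs!Suc k) \<subset> branch (xs!0) (xs!1)" using sub xin xout by blast
  moreover have "finite (branch (xs!0) (xs!1))" using finP unfolding branch_def by simp
  ultimately show ?thesis by (simp add: psubset_card_mono)
qed

lemma ep_upd: assumes "u \<notin> set xs"
  shows "ep {(a,b). b \<in> (s(u := S)) a} xs \<longleftrightarrow> ep {(a,b). b \<in> s a} xs"
proof -
  have eq: "\<And>a. a \<in> set xs \<Longrightarrow> (s(u:=S)) a = s a" using assms by (metis fun_upd_other)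
  show ?thesis
  proof
    assume h: "ep {(a,b). b \<in> (s(u := S)) a} xs"
    show "ep {(a,b). b \<in> s a} xs" using h by (rule ep_mono) (simp add: eq del: fun_upd_apply)
  next
    assume h: "ep {(a,b). b \<in> s a} xs"
    show "ep {(a,b). b \<in> (s(u := S)) a} xs" using h by (rule ep_mono) (simp add: eq del: fun_upd_apply)
  qed
qed

lemma branch_facts: assumes "(u,x) \<in> E" "v \<in> P" "d x v < d u v"
  shows "v \<noteq> u" "nxt u v = x" "tp u v = u # tp x v" "u \<notin> set (tp x v)"
proof -
  have uP: "u \<in> P" using E_P(1)[OF assms(1)] .
  show vu: "v \<noteq> u" "nxt u v = x" using char_iff[OF assms(1,2)] assms(3) by auto
  then show T: "tp u v = u # tp x v" using nxt_Cons(1)[OF uP assms(2)] by auto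
  show "u \<notin> set (tp x v)" using tp_props(4)[OF uP assms(2)] T by simp
qed

lemma one_path: assumes "valid_profile P t" "(u,x) \<in> E" "v \<in> P" "x \<in> t u" "d x v < d u v"
  "ep {(a,b). b \<in> t a} (tp x v)"
  shows "stretch d Z t u v = 1"
proof -
  have uP: "u \<in> P" and xP: "x \<in> P" using E_P assms(2) by auto
  note B = branch_facts[OF assms(2,3,5)]
  have G: "greedy_path d t x v (tp x v) \<and> plen d (tp x v) = d x v" using tp_greedy[OF xP assms(3,6)] .
  obtain rest where r: "tp x v = x # rest" using tp_props(1,2)[OF xP assms(3)] by (metis list.collapse)
  have g: "greedy_path d t u v (u # x # rest)" unfolding gp_Cons2 using assms(4,5) G r by simp
  have "plen d (u # x # rest) = d u x + d x v" using G r by simp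
  also have "\<dots> = d u v" using char_in[OF assms(2,3) B(1,2)] d_edge[OF assms(2)] by simp
  finally show ?thesis using stretch_eq1[OF assms(1) uP assms(3) B(1)[symmetric] g] by blast
qed

lemma tree_valid: "valid_profile P (tree_profile P E)"
  unfolding valid_profile_def tree_profile_def using irr by auto

lemma tree_stretch: assumes "u \<in> P" "v \<in> P" "u \<noteq> v"
  shows "stretch d Z (tree_profile P E) u v = 1"
proof -
  let ?x = "nxt u v"
  note N = nxt_Cons[OF assms]
  have "d ?x v < d u v" using char_iff[OF N(2) assms(2)] assms(3) by simp
  moreover have "?x \<in> tree_profile P E u" using N(2,4) unfolding tree_profile_def by simp
  moreover have "ep {(a,b). b \<in> tree_profile P E a} (tp ?x v)"
    using tp_props(5)[OF N(4) assms(2)] by (rule ep_mono) (auto simp: tree_profile_def dest: E_P)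
  ultimately show ?thesis using one_path[OF tree_valid N(2) assms(2)] by blast
qed

lemma sum_P_remove: assumes "x \<in> P - {u}"
  shows "(\<Sum>v\<in>P - {u}. f v) = f x + (\<Sum>v\<in>P - {u} - {x}. f v)"
  using sum.remove[of "P - {u}" x f] finP assms by simp

lemma tree_cost: "u \<in> P \<Longrightarrow> cost P d Z \<alpha> (tree_profile P E) u = real (card (P - {u})) + \<alpha> * real (card (tree_profile P E u))"
proof -
  assume uP: "u \<in> P"
  have "(\<Sum>v\<in>P - {u}. stretch d Z (tree_profile P E) u v) = (\<Sum>v\<in>P - {u}. 1)"
    by (rule sum.cong) (use tree_stretch uP in auto)
  then show ?thesis unfolding cost_def by simp
qed

lemma tree_nash_one: assumes "u \<in> P" "S' \<subseteq> P - {u}" "Z \<ge> 1 + \<alpha> * real (card P)" "\<alpha> \<ge> 0"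
  shows "cost P d Z \<alpha> (tree_profile P E) u \<le> cost P d Z \<alpha> ((tree_profile P E)(u := S')) u"
proof -
  let ?s = "tree_profile P E" let ?t = "?s(u := S')"
  have vt: "valid_profile P ?t" using tree_valid assms(2) unfolding valid_profile_def by auto
  have "\<alpha> * real (card P) \<ge> 0" using assms(4) by simp
  then have Z1: "Z \<ge> 1" using assms(3) by linarith
  have ge1: "\<And>v. v \<in> P - {u} \<Longrightarrow> 1 \<le> stretch d Z ?t u v"
    using stretch_ge1[OF vt assms(1) _ _ Z1] by blast
  have finS: "finite S'" using assms(2) finP finite_subset by blast
  have cN: "card (?s u) \<le> card P" using finP unfolding tree_profile_def by (simp add: card_mono)
  show ?thesis
  proof (cases "\<forall>x. (u,x) \<in> E \<longrightarrow> (\<exists>z\<in>S'. d z x < d u x)")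
    case True
    have "?s u \<subseteq> nxt u ` S'"
    proof
      fix x assume "x \<in> ?s u"
      then have ux: "(u,x) \<in> E" unfolding tree_profile_def by simp
      then obtain z where z: "z \<in> S'" "d z x < d u x" using True by blast
      have "z \<in> P" "z \<noteq> u" using z(1) assms(2) by auto
      moreover have "x \<in> P" "x \<noteq> u" using ux E_P irr by auto
      ultimately have "nxt u z = nxt u x" using first_hop[OF assms(1)] z(2) by blast
      then have "nxt u z = x" using nxt_edge[OF ux] by simp
      then show "x \<in> nxt u ` S'" using z(1) by force
    qed
    then have "card (?s u) \<le> card (nxt u ` S')" using finS by (simp add: card_mono)
    also have "\<dots> \<le> card S'" using finS by (rule card_image_le)
    finally have c: "real (card (?s u)) \<le> real (card S')" by simp
    have "real (card (P - {u})) = (\<Sum>v\<in>P - {u}. (1::real))" by simp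
    also have "\<dots> \<le> (\<Sum>v\<in>P - {u}. stretch d Z ?t u v)" using ge1 by (rule sum_mono)
    finally have "real (card (P - {u})) \<le> (\<Sum>v\<in>P - {u}. stretch d Z ?t u v)" .
    then show ?thesis unfolding tree_cost[OF assms(1)] unfolding cost_def
      using c assms(4) mult_left_mono[OF c assms(4)] by simp
  next
    case False
    then obtain x where ux: "(u,x) \<in> E" and nz: "\<not> (\<exists>z\<in>S'. d z x < d u x)" by blast
    have xP: "x \<in> P - {u}" using ux E_P irr by auto
    have "\<not> (\<exists>xs. greedy_path d ?t u x xs)"
    proof
      assume "\<exists>xs. greedy_path d ?t u x xs"
      then obtain xs where g: "greedy_path d ?t u x xs" by blast
      obtain b ys where "b \<in> ?t u" "d b x < d u x" using gp_step[OF g] xP by blast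
      then show False using nz by simp
    qed
    then have sZ: "stretch d Z ?t u x = Z" by (rule stretch_none)
    have "(\<Sum>v\<in>P - {u} - {x}. (1::real)) \<le> (\<Sum>v\<in>P - {u} - {x}. stretch d Z ?t u v)"
      using ge1 by (intro sum_mono) auto
    moreover have "(\<Sum>v\<in>P - {u} - {x}. (1::real)) = real (card (P - {u})) - 1"
    proof -
      have "0 < card (P - {u})" using xP finP by (auto simp: card_gt_0_iff)
      then show ?thesis using xP finP by (simp add: card_Diff_singleton of_nat_diff)
    qed
    ultimately have "real (card (P - {u})) - 1 + Z \<le> (\<Sum>v\<in>P - {u}. stretch d Z ?t u v)"
      using sum_P_remove[OF xP, of "stretch d Z ?t u"] sZ by simp
    moreover have "\<alpha> * real (card (?s u)) \<le> \<alpha> * real (card P)"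
      using cN assms(4) by (simp add: mult_left_mono)
    moreover have "0 \<le> \<alpha> * real (card S')" using assms(4) by simp
    ultimately show ?thesis unfolding tree_cost[OF assms(1)] unfolding cost_def using assms(3) by simp
  qed
qed

lemma tree_nash: assumes "Z \<ge> 1 + \<alpha> * real (card P)" "\<alpha> \<ge> 0"
  shows "nash_equilibrium P d Z \<alpha> (tree_profile P E)"
  unfolding nash_equilibrium_def
proof (intro conjI ballI allI impI)
  show "valid_profile P (tree_profile P E)" by (rule tree_valid)
  fix u S' assume "u \<in> P" "S' \<subseteq> P - {u}"
  then show "cost P d Z \<alpha> (tree_profile P E) u \<le> cost P d Z \<alpha> ((tree_profile P E)(u := S')) u"
    using tree_nash_one[OF _ _ assms] by blast
qed

lemma improve:
  assumes vs: "valid_profile P s" and ux: "(u,x) \<in> E" and Ssub: "S' \<subseteq> P - {u}" and xS: "x \<in> S'"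
    and A0: "\<forall>v. v \<in> P \<longrightarrow> d x v < d u v \<longrightarrow> ep {(a,b). b \<in> s a} (tp x v)"
    and H20: "\<forall>z. z \<in> S' \<longrightarrow> z \<noteq> x \<longrightarrow> z \<in> s u"
    and H30: "\<forall>z. z \<in> s u \<longrightarrow> z \<notin> S' \<longrightarrow> nxt u z = x"
    and Z1: "Z \<ge> 1"
  shows "\<And>v. v \<in> P - {u} \<Longrightarrow> stretch d Z (s(u := S')) u v \<le> stretch d Z s u v"
    and "stretch d Z (s(u := S')) u x = 1"
proof -
  let ?t = "s(u := S')"
  have A: "\<And>v. v \<in> P \<Longrightarrow> d x v < d u v \<Longrightarrow> ep {(a,b). b \<in> s a} (tp x v)" using A0 by blast
  have H2: "\<And>z. z \<in> S' \<Longrightarrow> z \<noteq> x \<Longrightarrow> z \<in> s u" using H20 by blast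
  have H3: "\<And>z. z \<in> s u \<Longrightarrow> z \<notin> S' \<Longrightarrow> nxt u z = x" using H30 by blast
  have uP: "u \<in> P" and xP: "x \<in> P" using E_P ux by auto
  have xu: "x \<noteq> u" using ux irr by auto
  have vt: "valid_profile P ?t" using vs Ssub unfolding valid_profile_def by auto
  have one: "stretch d Z ?t u v = 1" if v: "v \<in> P" "d x v < d u v" for v
  proof -
    note B = branch_facts[OF ux v]
    have "ep {(a,b). b \<in> ?t a} (tp x v)" using A[OF v] ep_upd[OF B(4)] by blast
    then show ?thesis using one_path[OF vt ux v(1) _ v(2)] xS by simp
  qed
  show "stretch d Z ?t u x = 1"
  proof (rule one[OF xP])
    show "d x x < d u x" using d_self[OF xP] d_pos[OF uP xP xu[symmetric]] by simp
  qed
  fix v assume v: "v \<in> P - {u}"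
  have vP: "v \<in> P" and vu: "v \<noteq> u" using v by auto
  show "stretch d Z ?t u v \<le> stretch d Z s u v"
  proof (cases "d x v < d u v")
    case True
    then show ?thesis using one[OF vP True] stretch_ge1[OF vs uP vP vu[symmetric] Z1] by simp
  next
    case False
    have "greedy_path d ?t u v xs \<longleftrightarrow> greedy_path d s u v xs" for xs
    proof
      assume g: "greedy_path d ?t u v xs"
      obtain b ys where b: "xs = u # b # ys" "b \<in> ?t u" "d b v < d u v" "greedy_path d ?t b v (b # ys)"
        using gp_step[OF g vu[symmetric]] by blast
      have "greedy_path d ?t u v (u # b # ys)" using g b(1) by simp
      then have nu: "u \<notin> set (b # ys)" by (rule gp_hd_notin)
      have bS: "b \<in> S'" using b(2) by simp
      have "b \<noteq> x" using b(3) False by auto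
      then have "b \<in> s u" using H2 bS by blast
      moreover have "greedy_path d s b v (b # ys)" using b(4) gp_upd[OF nu] by blast
      ultimately show "greedy_path d s u v xs" using b(1,3) by (simp add: gp_Cons2)
    next
      assume g: "greedy_path d s u v xs"
      obtain b ys where b: "xs = u # b # ys" "b \<in> s u" "d b v < d u v" "greedy_path d s b v (b # ys)"
        using gp_step[OF g vu[symmetric]] by blast
      have "greedy_path d s u v (u # b # ys)" using g b(1) by simp
      then have nu: "u \<notin> set (b # ys)" by (rule gp_hd_notin)
      have bP: "b \<in> P" "b \<noteq> u" using b(2) vs uP unfolding valid_profile_def by auto
      have "b \<in> S'"
      proof (rule ccontr)
        assume "b \<notin> S'"
        then have "nxt u b = x" using H3 b(2) by blast
        moreover have "nxt u b = nxt u v" using first_hop[OF uP bP(1) vP b(3) bP(2) vu] .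
        ultimately have "nxt u v = x" by simp
        then have "d x v < d u v" using char_iff[OF ux vP] vu by simp
        then show False using False by simp
      qed
      then have "b \<in> ?t u" by simp
      moreover have "greedy_path d ?t b v (b # ys)" using b(4) gp_upd[OF nu] by blast
      ultimately show "greedy_path d ?t u v xs" using b(1,3) by (simp add: gp_Cons2)
    qed
    then have "stretch d Z ?t u v = stretch d Z s u v" by (rule stretch_cong)
    then show ?thesis by simp
  qed
qed

lemma improve_sum:
  fixes f g :: "'a \<Rightarrow> real"
  assumes "x \<in> P - {u}" "\<And>v. v \<in> P - {u} \<Longrightarrow> f v \<le> g v" "f x = 1"
  shows "(\<Sum>v\<in>P - {u}. f v) \<le> (\<Sum>v\<in>P - {u}. g v) - g x + 1"
proof -
  have "(\<Sum>v\<in>P - {u} - {x}. f v) \<le> (\<Sum>v\<in>P - {u} - {x}. g v)" by (rule sum_mono) (use assms(2) in auto)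
  then show ?thesis using sum_P_remove[OF assms(1), of f] sum_P_remove[OF assms(1), of g] assms(3) by simp
qed

lemma arcs_present:
  assumes GE: "greedy_equilibrium P d Z \<alpha> s" and Z: "Z > 1 + \<alpha>" "Z \<ge> 1" "Z > 1" and ux: "(u,x) \<in> E"
  shows "x \<in> s u"
  using ux
proof (induction "card (branch u x)" arbitrary: u x rule: less_induct)
  case less
  have vs: "valid_profile P s" using GE unfolding greedy_equilibrium_def by blast
  have ux: "(u,x) \<in> E" by (fact less.prems)
  have uP: "u \<in> P" and xP: "x \<in> P" using E_P ux by auto
  have xu: "x \<noteq> u" using ux irr by auto
  have su: "s u \<subseteq> P - {u}" using vs uP unfolding valid_profile_def by blast
  have fin: "finite (s u)" using su finP finite_subset by blast
  have ge: "\<And>S'. S' \<in> greedy_moves P u (s u) \<Longrightarrow> cost P d Z \<alpha> s u \<le> cost P d Z \<alpha> (s(u := S')) u"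
    using GE uP unfolding greedy_equilibrium_def by blast
  show "x \<in> s u"
  proof (rule ccontr)
    assume xn: "x \<notin> s u"
    have A: "ep {(a,b). b \<in> s a} (tp x v)" if v: "v \<in> P" "d x v < d u v" for v
    proof -
      note B = branch_facts[OF ux v]
      let ?xs = "tp u v"
      have T: "?xs = u # tp x v" by (fact B(3))
      note TP = tp_props[OF uP v(1)]
      show ?thesis unfolding ep_nth[symmetric]
      proof (intro allI impI)
        fix i assume i: "Suc i < length (tp x v)"
        have l: "Suc (Suc i) < length ?xs" using i T by simp
        have e: "(?xs ! Suc i, ?xs ! Suc (Suc i)) \<in> E" using TP(5) l unfolding ep_nth[symmetric] by blast
        have "card (branch (?xs ! Suc i) (?xs ! Suc (Suc i))) < card (branch (?xs!0) (?xs!1))"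
          using below[OF uP v(1) refl _ l] by simp
        moreover have "?xs!0 = u" "?xs!1 = x" using T tp_props(1,2)[OF xP v(1)] by (auto simp: hd_conv_nth)
        ultimately have "card (branch (?xs ! Suc i) (?xs ! Suc (Suc i))) < card (branch u x)" by simp
        then have "?xs ! Suc (Suc i) \<in> s (?xs ! Suc i)" using less.hyps e by blast
        then show "(tp x v ! i, tp x v ! Suc i) \<in> {(a,b). b \<in> s a}" using T by simp
      qed
    qed
    show False
    proof (cases "\<exists>y\<in>s u. d y x < d u x")
      case True
      then obtain y where y: "y \<in> s u" "d y x < d u x" by blast
      let ?S' = "insert x (s u - {y})"
      have mv: "?S' \<in> greedy_moves P u (s u)" using y(1) xP xu xn unfolding greedy_moves_def by blast
      have Ssub: "?S' \<subseteq> P - {u}" using su xP xu by blast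
      have yP: "y \<in> P" "y \<noteq> u" using y(1) su by auto
      have ny: "nxt u y = x" using first_hop[OF uP yP(1) xP y(2) yP(2) xu] nxt_edge[OF ux] by simp
      have H3: "\<And>z. z \<in> s u \<Longrightarrow> z \<notin> ?S' \<Longrightarrow> nxt u z = x" using ny by auto
      have xS: "x \<in> ?S'" by simp
      have H2: "\<And>z. z \<in> ?S' \<Longrightarrow> z \<noteq> x \<Longrightarrow> z \<in> s u" by auto
      have A0: "\<forall>v. v \<in> P \<longrightarrow> d x v < d u v \<longrightarrow> ep {(a,b). b \<in> s a} (tp x v)" using A by blast
      have H20: "\<forall>z. z \<in> ?S' \<longrightarrow> z \<noteq> x \<longrightarrow> z \<in> s u" using H2 by blast
      have H30: "\<forall>z. z \<in> s u \<longrightarrow> z \<notin> ?S' \<longrightarrow> nxt u z = x" using H3 by blast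
      note I = improve[OF vs ux Ssub xS A0 H20 H30 Z(2)]
      have xP': "x \<in> P - {u}" using xP xu by simp
      have "(\<Sum>v\<in>P - {u}. stretch d Z (s(u := ?S')) u v) \<le> (\<Sum>v\<in>P - {u}. stretch d Z s u v) - stretch d Z s u x + 1"
        using improve_sum[where f="stretch d Z (s(u := ?S')) u" and g="stretch d Z s u", OF xP' I(1) I(2)] by simp
      moreover have "stretch d Z s u x > 1"
      proof (rule stretch_gt1[OF vs uP xP xu[symmetric]])
        show "Z > 1" by (fact Z(3))
        fix xs assume g: "greedy_path d s u x xs"
        obtain b ys where b: "xs = u # b # ys" "b \<in> s u" "d b x < d u x" "greedy_path d s b x (b # ys)"
          using gp_step[OF g xu[symmetric]] by blast
        have bP: "b \<in> P" "b \<noteq> u" using b(2) su by auto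
        have bx: "b \<noteq> x" using b(2) xn by auto
        have "nxt u b = x" using first_hop[OF uP bP(1) xP b(3) bP(2) xu] nxt_edge[OF ux] by simp
        then have db: "d u b = w u x + d x b" using char_in[OF ux bP(1) bP(2)] by simp
        have "d b x \<le> plen d (b # ys)" using gp_plen[OF vs bP(1) xP b(4)] .
        moreover have "plen d xs = d u b + plen d (b # ys)" using b(1) by simp
        moreover have "d x b > 0" using d_pos[OF xP bP(1) bx[symmetric]] .
        moreover have "d b x = d x b" using d_sym[OF xP bP(1)] .
        moreover have "d u x = w u x" using d_edge[OF ux] .
        ultimately show "plen d xs > d u x" using db by simp
      qed
      moreover have "card ?S' = card (s u)"
      proof -
        have "card (s u - {y}) = card (s u) - 1" using y(1) by (simp add: card_Diff_singleton)
        moreover have "x \<notin> s u - {y}" using xn by simp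
        moreover have "card (s u) > 0" using fin y(1) by (auto simp: card_gt_0_iff)
        ultimately show ?thesis using fin by simp
      qed
      ultimately have "cost P d Z \<alpha> (s(u := ?S')) u < cost P d Z \<alpha> s u"
        unfolding cost_def by simp
      then show False using ge[OF mv] by simp
    next
      case False
      let ?S' = "insert x (s u)"
      have mv: "?S' \<in> greedy_moves P u (s u)" using xP xu xn unfolding greedy_moves_def by blast
      have Ssub: "?S' \<subseteq> P - {u}" using su xP xu by blast
      have H3: "\<And>z. z \<in> s u \<Longrightarrow> z \<notin> ?S' \<Longrightarrow> nxt u z = x" by auto
      have xS: "x \<in> ?S'" by simp
      have H2: "\<And>z. z \<in> ?S' \<Longrightarrow> z \<noteq> x \<Longrightarrow> z \<in> s u" by auto
      have A0: "\<forall>v. v \<in> P \<longrightarrow> d x v < d u v \<longrightarrow> ep {(a,b). b \<in> s a} (tp x v)" using A by blast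
      have H20: "\<forall>z. z \<in> ?S' \<longrightarrow> z \<noteq> x \<longrightarrow> z \<in> s u" using H2 by blast
      have H30: "\<forall>z. z \<in> s u \<longrightarrow> z \<notin> ?S' \<longrightarrow> nxt u z = x" using H3 by blast
      note I = improve[OF vs ux Ssub xS A0 H20 H30 Z(2)]
      have xP': "x \<in> P - {u}" using xP xu by simp
      have "(\<Sum>v\<in>P - {u}. stretch d Z (s(u := ?S')) u v) \<le> (\<Sum>v\<in>P - {u}. stretch d Z s u v) - stretch d Z s u x + 1"
        using improve_sum[where f="stretch d Z (s(u := ?S')) u" and g="stretch d Z s u", OF xP' I(1) I(2)] by simp
      moreover have "stretch d Z s u x = Z"
      proof (rule stretch_none)
        show "\<not> (\<exists>xs. greedy_path d s u x xs)"
        proof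
          assume "\<exists>xs. greedy_path d s u x xs"
          then obtain xs where g: "greedy_path d s u x xs" by blast
          obtain b ys where "b \<in> s u" "d b x < d u x" using gp_step[OF g xu[symmetric]] by blast
          then show False using False by blast
        qed
      qed
      moreover have "card ?S' = card (s u) + 1" using fin xn by simp
      ultimately have "cost P d Z \<alpha> (s(u := ?S')) u < cost P d Z \<alpha> s u"
        unfolding cost_def using Z(1) by (simp add: algebra_simps)
      then show False using ge[OF mv] by simp
    qed
  qed
qed

lemma ge_unique:
  assumes GE: "greedy_equilibrium P d Z \<alpha> s" and Z: "Z > 1 + \<alpha>" "Z \<ge> 1" "\<alpha> > 0" and uP: "u \<in> P"
  shows "s u = tree_profile P E u"
proof
  have Z1: "Z > 1" using Z(1,3) by simp
  show "tree_profile P E u \<subseteq> s u"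
    using arcs_present[OF GE Z(1,2) Z1] unfolding tree_profile_def by blast
  have vs: "valid_profile P s" using GE unfolding greedy_equilibrium_def by blast
  have su: "s u \<subseteq> P - {u}" using vs uP unfolding valid_profile_def by blast
  have fin: "finite (s u)" using su finP finite_subset by blast
  have ge: "\<And>S'. S' \<in> greedy_moves P u (s u) \<Longrightarrow> cost P d Z \<alpha> s u \<le> cost P d Z \<alpha> (s(u := S')) u"
    using GE uP unfolding greedy_equilibrium_def by blast
  show "s u \<subseteq> tree_profile P E u"
  proof
    fix z assume z: "z \<in> s u"
    show "z \<in> tree_profile P E u"
    proof (rule ccontr)
      assume zn: "z \<notin> tree_profile P E u"
      have zP: "z \<in> P" using z su by auto
      then have nE: "(u,z) \<notin> E" using zn unfolding tree_profile_def by simp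
      let ?S' = "s u - {z}"
      let ?t = "s(u := ?S')"
      have mv: "?S' \<in> greedy_moves P u (s u)" using z unfolding greedy_moves_def by blast
      have vt: "valid_profile P ?t" using vs su unfolding valid_profile_def by auto
      have one: "stretch d Z ?t u v = 1" if v: "v \<in> P - {u}" for v
      proof -
        have vP: "v \<in> P" "u \<noteq> v" using v by auto
        let ?x = "nxt u v"
        note N = nxt_Cons[OF uP vP]
        have dx: "d ?x v < d u v" using char_iff[OF N(2) vP(1)] vP(2) by simp
        note B = branch_facts[OF N(2) vP(1) dx]
        have "?x \<in> s u" using arcs_present[OF GE Z(1,2) Z1 N(2)] .
        moreover have "?x \<noteq> z" using N(2) nE by auto
        ultimately have xt: "?x \<in> ?t u" by simp
        have "ep {(a,b). b \<in> s a} (tp ?x v)"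
          using tp_props(5)[OF N(4) vP(1)] by (rule ep_mono) (use arcs_present[OF GE Z(1,2) Z1] in blast)
        then have "ep {(a,b). b \<in> ?t a} (tp ?x v)" using ep_upd[OF B(4)] by blast
        then show ?thesis using one_path[OF vt N(2) vP(1) xt dx] by blast
      qed
      have "(\<Sum>v\<in>P - {u}. stretch d Z ?t u v) = (\<Sum>v\<in>P - {u}. 1)" by (rule sum.cong) (use one in auto)
      also have "\<dots> \<le> (\<Sum>v\<in>P - {u}. stretch d Z s u v)"
        by (rule sum_mono) (use stretch_ge1[OF vs uP _ _ Z(2)] in auto)
      finally have S: "(\<Sum>v\<in>P - {u}. stretch d Z ?t u v) \<le> (\<Sum>v\<in>P - {u}. stretch d Z s u v)" .
      have "card ?S' < card (s u)" using fin z by (rule card_Diff1_less)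
      then have "\<alpha> * real (card ?S') < \<alpha> * real (card (s u))" using Z(3) by simp
      then have "cost P d Z \<alpha> ?t u < cost P d Z \<alpha> s u" unfolding cost_def using S by simp
      then show False using ge[OF mv] by simp
    qed
  qed
qed

end

lemma moves_sub: "S \<subseteq> P - {u} \<Longrightarrow> S' \<in> greedy_moves P u S \<Longrightarrow> S' \<subseteq> P - {u}"
  unfolding greedy_moves_def by auto

lemma nash_ge: assumes "nash_equilibrium P d Z \<alpha> s" shows "greedy_equilibrium P d Z \<alpha> s"
  unfolding greedy_equilibrium_def
proof (intro conjI ballI)
  show v: "valid_profile P s" using assms unfolding nash_equilibrium_def by (rule conjunct1)
  fix u S' assume u: "u \<in> P" and S': "S' \<in> greedy_moves P u (s u)"
  have "s u \<subseteq> P - {u}" using v u unfolding valid_profile_def by simp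
  then have "S' \<subseteq> P - {u}" using S' by (rule moves_sub)
  then show "cost P d Z \<alpha> s u \<le> cost P d Z \<alpha> (s(u := S')) u"
  proof -
    have "\<forall>u\<in>P. \<forall>S'. S' \<subseteq> P - {u} \<longrightarrow> cost P d Z \<alpha> s u \<le> cost P d Z \<alpha> (s(u := S')) u"
      using assms unfolding nash_equilibrium_def by (rule conjunct2)
    then show ?thesis using u \<open>S' \<subseteq> P - {u}\<close> by simp
  qed
qed


theorem theorem3p4:
  fixes P :: "'a set" and E :: "('a \<times> 'a) set" and w :: "'a \<Rightarrow> 'a \<Rightarrow> real" and \<alpha> :: real
  assumes "finite P"
    and "is_spanning_tree P E"
    and "pos_weights E w"
    and "\<alpha> > 0"
  shows "\<exists>Z0. \<forall>Z \<ge> Z0.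
    greedy_equilibrium P (tree_dist E w) Z \<alpha> (tree_profile P E) \<and>
    (\<forall>s. greedy_equilibrium P (tree_dist E w) Z \<alpha> s \<longrightarrow> (\<forall>u\<in>P. s u = tree_profile P E u)) \<and>
    nash_equilibrium P (tree_dist E w) Z \<alpha> (tree_profile P E) \<and>
    (\<forall>s. nash_equilibrium P (tree_dist E w) Z \<alpha> s \<longrightarrow> (\<forall>u\<in>P. s u = tree_profile P E u))"
proof -
  interpret T: tree P E w using assms(1-3) by unfold_locales
  show ?thesis
  proof (intro exI allI impI)
    fix Z assume Z: "2 + \<alpha> * (real (card P) + 1) \<le> Z"
    have a0: "\<alpha> \<ge> 0" using assms(4) by simp
    have c0: "\<alpha> * real (card P) \<ge> 0" using a0 by simp
    have Za: "Z > 1 + \<alpha>" using Z c0 by (simp add: algebra_simps)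
    have Z1: "Z \<ge> 1" using Za a0 by simp
    have Zc: "Z \<ge> 1 + \<alpha> * real (card P)" using Z assms(4) by (simp add: algebra_simps)
    have N: "nash_equilibrium P (tree_dist E w) Z \<alpha> (tree_profile P E)"
      using T.tree_nash[OF Zc a0] .
    have G: "greedy_equilibrium P (tree_dist E w) Z \<alpha> (tree_profile P E)"
      using nash_ge[OF N] .
    have U: "\<forall>s. greedy_equilibrium P (tree_dist E w) Z \<alpha> s \<longrightarrow> (\<forall>u\<in>P. s u = tree_profile P E u)"
      using T.ge_unique[OF _ Za Z1 assms(4)] by blast
    have UN: "\<forall>s. nash_equilibrium P (tree_dist E w) Z \<alpha> s \<longrightarrow> (\<forall>u\<in>P. s u = tree_profile P E u)"
      using U nash_ge by blast
    show "greedy_equilibrium P (tree_dist E w) Z \<alpha> (tree_profile P E) \<and>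
    (\<forall>s. greedy_equilibrium P (tree_dist E w) Z \<alpha> s \<longrightarrow> (\<forall>u\<in>P. s u = tree_profile P E u)) \<and>
    nash_equilibrium P (tree_dist E w) Z \<alpha> (tree_profile P E) \<and>
    (\<forall>s. nash_equilibrium P (tree_dist E w) Z \<alpha> s \<longrightarrow> (\<forall>u\<in>P. s u = tree_profile P E u))"
      using G U N UN by blast
  qed
qed

end
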